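(* Let $X$ be a real Hausdorff locally convex topological vector space, let $V\subseteq X$ be convex and let $U\subseteq V$ be self-segment-dense in $V$. Then for every subset $\mathcal S\subseteq U$ one has $\operatorname{cl}(\operatorname{co}(\mathcal S)\cap U)=\operatorname{cl}(\operatorname{co}(\mathcal S))$; moreover, $\operatorname{co}(\mathcal S)\cap U$ is self-segment-dense in $\operatorname{co}(\mathcal S)$.
   Context: $\operatorname{co}$ denotes the convex hull and $\operatorname{cl}$ the closure. For $x,y\in X$, $[x,y]=\{x+t(y-x):t\in[0,1]\}$. A set $P$ is dense in $D$ if $D\subseteq\operatorname{cl}(P)$. Definition (self-segment-dense): for a convex set $V\subseteq X$ and $U\subseteq V$, $U$ is self-segment-dense in $V$ if $U$ is dense in $V$ and for all $x,y\in U$ the set $[x,y]\cap U$ is dense in $[x,y]$. *)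

theory Defs
  imports "HOL-Analysis.Analysis"
begin

text \<open>The Hausdorff property is imposed via the type class t2_space.\<close>
definition real_lctvs :: "'a::{real_vector,topological_space} itself \<Rightarrow> bool" where
  "real_lctvs _ \<longleftrightarrow>
     continuous_on UNIV (\<lambda>p::'a \<times> 'a. fst p + snd p) \<and>
     continuous_on UNIV (\<lambda>p::real \<times> 'a. fst p *\<^sub>R snd p) \<and>
     (\<forall>(x::'a) S. open S \<and> x \<in> S \<longrightarrow> (\<exists>C. open C \<and> convex C \<and> x \<in> C \<and> C \<subseteq> S))"

definition dense_in :: "'a::topological_space set \<Rightarrow> 'a set \<Rightarrow> bool" where
  "dense_in P D \<longleftrightarrow> D \<subseteq> closure P"

text \<open>U is self-segment-dense in V (V convex, U a subset of V is assumed separately).\<close>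
definition self_segment_dense :: "'a::{real_vector,topological_space} set \<Rightarrow> 'a set \<Rightarrow> bool" where
  "self_segment_dense U V \<longleftrightarrow>
     dense_in U V \<and> (\<forall>x\<in>U. \<forall>y\<in>U. dense_in (closed_segment x y \<inter> U) (closed_segment x y))"

end

theory Submission
  imports Defs
begin

theorem mainTheorem1:
  fixes V U S :: "'a::{real_vector,t2_space} set"
  assumes "real_lctvs TYPE('a)"
    and "convex V"
    and "U \<subseteq> V"
    and "self_segment_dense U V"
    and "S \<subseteq> U"
  shows "closure (convex hull S \<inter> U) = closure (convex hull S)
         \<and> self_segment_dense (convex hull S \<inter> U) (convex hull S)"
proof -
  define B where "B = convex hull S \<inter> U"
  define C where "C = closure B"
  have add: "continuous_on UNIV (\<lambda>p::'a \<times> 'a. fst p + snd p)"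
    and smul: "continuous_on UNIV (\<lambda>p::real \<times> 'a. fst p *\<^sub>R snd p)"
    using assms(1) unfolding real_lctvs_def by auto
  have seg: "\<forall>x\<in>U. \<forall>y\<in>U. closed_segment x y \<subseteq> closure (closed_segment x y \<inter> U)"
    using assms(4) unfolding self_segment_dense_def dense_in_def by auto
  have step1: "(1 - u) *\<^sub>R p + u *\<^sub>R q \<in> C" if "p \<in> B" "q \<in> B" "0 \<le> u" "u \<le> 1" for p q u
  proof -
    have sub: "closed_segment p q \<subseteq> convex hull S"
      using that by (intro closed_segment_subset) (auto simp: B_def convex_convex_hull)
    have "(1 - u) *\<^sub>R p + u *\<^sub>R q \<in> closed_segment p q"
      using that by (auto simp: in_segment)
    also have "\<dots> \<subseteq> closure (closed_segment p q \<inter> U)"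
      using seg that by (auto simp: B_def)
    also have "\<dots> \<subseteq> C" unfolding C_def B_def
      using sub by (intro closure_mono) auto
    finally show ?thesis .
  qed
  have sm: "continuous_on A (\<lambda>x::'a. c *\<^sub>R x)" for A and c :: real
  proof -
    have "continuous_on A ((\<lambda>p::real \<times> 'a. fst p *\<^sub>R snd p) \<circ> (\<lambda>x. (c, x)))"
      by (intro continuous_on_compose continuous_intros continuous_on_subset[OF smul]) auto
    then show ?thesis by (simp add: o_def)
  qed
  have convC: "convex C"
    unfolding convex_alt
  proof (intro ballI allI impI)
    fix p q and u :: real assume p: "p \<in> C" and q: "q \<in> C" and u: "0 \<le> u \<and> u \<le> 1"
    define f where "f = (\<lambda>z::'a\<times>'a. (1 - u) *\<^sub>R fst z + u *\<^sub>R snd z)"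
    have "continuous_on A f" for A
    proof -
      have "continuous_on A ((\<lambda>p::'a \<times> 'a. fst p + snd p) \<circ> (\<lambda>z. ((1 - u) *\<^sub>R fst z, u *\<^sub>R snd z)))"
        by (intro continuous_on_compose continuous_on_Pair continuous_on_subset[OF add]
            continuous_on_compose2[OF sm] continuous_on_fst continuous_on_snd continuous_on_id) auto
      then show ?thesis by (simp add: f_def o_def)
    qed
    moreover have "f ` (B \<times> B) \<subseteq> C" using step1 u by (auto simp: f_def)
    ultimately have "f ` closure (B \<times> B) \<subseteq> C"
      by (intro image_closure_subset) (auto simp: C_def)
    moreover have "(p, q) \<in> closure (B \<times> B)" using p q by (simp add: closure_Times C_def)
    ultimately show "(1 - u) *\<^sub>R p + u *\<^sub>R q \<in> C" by (force simp: f_def)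
  qed
  have "S \<subseteq> C" using assms(5) hull_subset[of S convex]
    unfolding C_def B_def by (meson closure_subset dual_order.trans le_inf_iff)
  hence hullC: "convex hull S \<subseteq> C" using convC by (intro hull_minimal)
  have eq: "closure B = closure (convex hull S)"
  proof
    show "closure B \<subseteq> closure (convex hull S)" unfolding B_def by (intro closure_mono) auto
    show "closure (convex hull S) \<subseteq> closure B"
      using hullC unfolding C_def by (metis closure_closure closure_mono)
  qed
  have "self_segment_dense B (convex hull S)"
    unfolding self_segment_dense_def dense_in_def
  proof (intro conjI ballI)
    show "convex hull S \<subseteq> closure B" using hullC C_def by simp
    fix x y assume x: "x \<in> B" and y: "y \<in> B"
    have sub: "closed_segment x y \<subseteq> convex hull S"
      using x y by (intro closed_segment_subset) (auto simp: B_def convex_convex_hull)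
    hence "closed_segment x y \<inter> B = closed_segment x y \<inter> U" unfolding B_def by auto
    thus "closed_segment x y \<subseteq> closure (closed_segment x y \<inter> B)"
      using seg x y by (auto simp: B_def)
  qed
  thus ?thesis using eq unfolding B_def by simp
qed

end
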